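(* Let $c>0$, $k>0$, and $\beta\in(0,1)$, and put $v=\beta c$ and $\gamma=(1-\beta^2)^{-1/2}$. Let $r:[0,\pi]\to(0,\infty)$ be the radial function of an axially symmetric cavity boundary, where the boundary is the surface of revolution $\{\,r(\theta)\,\hat{\mathbf n}\;:\;\hat{\mathbf n}\in S^2,\ \hat{\mathbf n}\cdot\hat{\mathbf x}=\cos\theta\,\}$ about the $x$-axis, with $\hat{\mathbf x}$ the unit vector along the $x$-axis. For each $\theta\in[0,\pi]$ let $\Delta t_{\mathrm{out}}(\theta)$ be the positive root $t$ of $$(c^2-v^2)\,t^2-2\,r(\theta)\,v\cos\theta\;t-r(\theta)^2=0,$$ let $\Delta t_{\mathrm{ret}}(\theta)$ be the positive root $t$ of $$(c^2-v^2)\,t^2+2\,r(\theta)\,v\cos\theta\;t-r(\theta)^2=0,$$ and define the round-trip phase $\Phi(\theta)=c\,k\,\bigl(\Delta t_{\mathrm{out}}(\theta)+\Delta t_{\mathrm{ret}}(\theta)\bigr)$. Assume $\Phi(\theta)$ is independent of $\theta\in[0,\pi]$. Then, with $a_\perp:=r(\pi/2)$, $$r(\theta)=\frac{a_\perp\sqrt{1-\beta^2}}{\sqrt{1-\beta^2\sin^2\theta}}\qquad\text{for all }\theta\in[0,\pi].$$ Equivalently, the boundary is the ellipsoid of revolution $$\frac{x^2}{(a_\perp/\gamma)^2}+\frac{y^2+z^2}{a_\perp^2}=1,$$ whose longitudinal semiaxis is $a_\parallel:=r(0)=a_\perp/\gamma$; in particular $$\frac{a_\parallel}{a_\perp}=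\frac1\gamma=\sqrt{1-\beta^2}.$$
   Context: Physical setting: a medium at rest supports nondispersive waves ($\omega=ck$) propagating isotropically at speed $c$ in the medium's rest frame. A cavity moves uniformly through the medium with velocity $v\hat{\mathbf x}$, $v=\beta c$. The boundary is described in the medium frame by the distance $r(\theta)$ from the cavity center to the boundary along a direction making angle $\theta$ with the direction of motion $\hat{\mathbf x}$. $\Delta t_{\mathrm{out}}(\theta)$ is the travel time of a wave emitted from the moving center to reach the co-moving boundary point in direction $\theta$ (wavefront distance $c\,\Delta t$ equals the distance to the translated boundary point), and $\Delta t_{\mathrm{ret}}(\theta)$ is the travel time for the return from that boundary point to the moving center; the defining quadratics above encode exactly these pursuit conditions. The requirement that $\Phi$ be independent of $\theta$ is called spherical-harmonic phase closure. *)

theory Defs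
  imports "HOL-Analysis.Analysis"
begin

text \<open>The positive root t of the quadratic A t^2 + B t + C = 0 (unique under the
  paper's hypotheses, since A > 0 and C < 0).\<close>
definition pos_root :: "real \<Rightarrow> real \<Rightarrow> real \<Rightarrow> real" where
  "pos_root A B C = (THE t. t > 0 \<and> A * t^2 + B * t + C = 0)"

definition dt_out :: "real \<Rightarrow> real \<Rightarrow> (real \<Rightarrow> real) \<Rightarrow> real \<Rightarrow> real" where
  "dt_out c v r \<theta> = pos_root (c^2 - v^2) (- 2 * r \<theta> * v * cos \<theta>) (- ((r \<theta>) ^ 2))"

definition dt_ret :: "real \<Rightarrow> real \<Rightarrow> (real \<Rightarrow> real) \<Rightarrow> real \<Rightarrow> real" where
  "dt_ret c v r \<theta> = pos_root (c^2 - v^2) (2 * r \<theta> * v * cos \<theta>) (- ((r \<theta>) ^ 2))"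

definition round_trip_phase :: "real \<Rightarrow> real \<Rightarrow> real \<Rightarrow> (real \<Rightarrow> real) \<Rightarrow> real \<Rightarrow> real" where
  "round_trip_phase c k v r \<theta> = c * k * (dt_out c v r \<theta> + dt_ret c v r \<theta>)"

definition cavity_boundary :: "(real \<Rightarrow> real) \<Rightarrow> (real \<times> real \<times> real) set" where
  "cavity_boundary r = {(r \<theta> * cos \<theta>, r \<theta> * sin \<theta> * cos \<phi>, r \<theta> * sin \<theta> * sin \<phi>) | \<theta> \<phi>.
      \<theta> \<in> {0..pi}}"

end

theory Submission
  imports Defs
begin

lemma pos_root_eq:
  fixes A B C :: real
  assumes "A > 0" "C < 0"
  shows "pos_root A B C = (- B + sqrt (B^2 - 4*A*C)) / (2*A)"
proof -
  define D where "D = B^2 - 4*A*C"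
  have D0: "D > B^2" using assms by (simp add: D_def mult_pos_neg)
  have sD: "sqrt D > \<bar>B\<bar>" using D0
    by (metis abs_ge_zero real_sqrt_abs real_sqrt_less_iff)
  have sq: "(sqrt D)^2 = D" using D0 by (smt (verit) real_sqrt_pow2 zero_le_power2)
  let ?t = "(- B + sqrt D) / (2*A)"
  have P: "?t > 0 \<and> A * ?t^2 + B * ?t + C = 0"
  proof
    show "?t > 0" using sD assms by (intro divide_pos_pos) auto
    have "A * ?t^2 + B * ?t + C = ((sqrt D)^2 - D) / (4*A)"
      using assms by (simp add: field_simps power2_eq_square D_def)
    then show "A * ?t^2 + B * ?t + C = 0" using sq by simp
  qed
  have U: "t = ?t" if "t > 0 \<and> A * t^2 + B * t + C = 0" for t
  proof -
    have "(2*A*t + B)^2 = D" using that unfolding D_def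
      by (simp add: power2_eq_square algebra_simps) (smt (verit) distrib_left mult.commute)
    hence "\<bar>2*A*t + B\<bar> = sqrt D" by (metis real_sqrt_abs)
    moreover have "2*A*t > 0" using that assms by simp
    ultimately have "2*A*t + B = sqrt D" using sD by (auto simp: abs_if split: if_splits)
    thus ?thesis using assms by (simp add: field_simps)
  qed
  show ?thesis unfolding pos_root_def D_def[symmetric]
    using P U by (intro the_equality) auto
qed

lemma phase_eq:
  fixes c k \<beta> R \<theta> :: real and r :: "real \<Rightarrow> real"
  assumes hc: "c > 0" and h\<beta>: "0 < \<beta>" "\<beta> < 1" and hR: "r \<theta> > 0"
  shows "round_trip_phase c k (\<beta> * c) r \<theta> = 2 * k * r \<theta> * sqrt (1 - \<beta>^2 * (sin \<theta>)^2) / (1 - \<beta>^2)"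
proof -
  define R where "R = r \<theta>"
  define A where "A = c^2 - (\<beta>*c)^2"
  have bb: "\<beta>^2 < 1" using h\<beta> by (simp add: power_less_one_iff)
  have A: "A = c^2 * (1 - \<beta>^2)" unfolding A_def by (simp add: algebra_simps power_mult_distrib)
  have Apos: "A > 0" unfolding A using hc bb by simp
  have C: "- (R^2) < 0" using hR R_def by simp
  define D where "D = (2 * R * (\<beta>*c) * cos \<theta>)^2 - 4*A*(- (R^2))"
  have D1: "(- 2 * R * (\<beta>*c) * cos \<theta>)^2 - 4*A*(- (R^2)) = D" unfolding D_def by (simp add: power2_eq_square)
  have "dt_out c (\<beta>*c) r \<theta> + dt_ret c (\<beta>*c) r \<theta> = sqrt D / A"
    unfolding dt_out_def dt_ret_def R_def[symmetric] A_def[symmetric]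
    using pos_root_eq[OF Apos C, of "- 2 * R * (\<beta>*c) * cos \<theta>"] pos_root_eq[OF Apos C, of "2 * R * (\<beta>*c) * cos \<theta>"]
    D1 by (simp add: add_divide_distrib[symmetric] diff_divide_distrib[symmetric])
  also have "D = (2 * R * c)^2 * (1 - \<beta>^2 * (sin \<theta>)^2)"
  proof -
    have e: "(cos \<theta>)^2 = 1 - (sin \<theta>)^2" using sin_cos_squared_add[of \<theta>] by linarith
    show ?thesis unfolding D_def A by (simp add: power_mult_distrib e algebra_simps)
  qed
  also have "sqrt \<dots> = 2 * R * c * sqrt (1 - \<beta>^2 * (sin \<theta>)^2)"
    using hR hc R_def by (simp add: real_sqrt_mult)
  finally have s: "dt_out c (\<beta>*c) r \<theta> + dt_ret c (\<beta>*c) r \<theta> = 2 * R * c * sqrt (1 - \<beta>^2 * (sin \<theta>)^2) / (c^2 * (1 - \<beta>^2))"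
    unfolding A .
  have nz: "1 - \<beta>^2 \<noteq> 0" using bb by simp
  show ?thesis unfolding round_trip_phase_def s R_def[symmetric] using hc nz
    by (simp add: field_simps power2_eq_square)
qed

lemma polar2:
  fixes y z :: real
  shows "\<exists>\<phi>. y = sqrt (y^2 + z^2) * cos \<phi> \<and> z = sqrt (y^2 + z^2) * sin \<phi>"
proof (cases "y^2 + z^2 = 0")
  case True
  then have "y = 0" "z = 0" by (auto simp: sum_power2_eq_zero_iff)
  then show ?thesis by simp
next
  case False
  define w where "w = sqrt (y^2 + z^2)"
  have wp: "w > 0" using False unfolding w_def
    by (metis add_nonneg_nonneg real_sqrt_gt_zero zero_le_power2 less_eq_real_def)
  have w2: "w^2 = y^2 + z^2" unfolding w_def by simp
  have "(y/w)^2 + (z/w)^2 = (y^2 + z^2) / w^2" by (simp add: power_divide add_divide_distrib)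
  also have "\<dots> = w^2 / w^2" by (simp add: w2)
  also have "\<dots> = 1" using wp by simp
  finally have "(y/w)^2 + (z/w)^2 = 1" .
  then obtain t where "y/w = cos t" "z/w = sin t" by (rule sincos_total_2pi)
  then show ?thesis using wp unfolding w_def[symmetric] by (intro exI[of _ t]) (auto simp: field_simps)
qed

lemma sph:
  fixes x y z :: real
  assumes hp: "sqrt (x^2 + y^2 + z^2) > 0"
  shows "\<exists>\<theta> \<phi>. \<theta> \<in> {0..pi} \<and> x = sqrt (x^2 + y^2 + z^2) * cos \<theta>
     \<and> y = sqrt (x^2 + y^2 + z^2) * sin \<theta> * cos \<phi> \<and> z = sqrt (x^2 + y^2 + z^2) * sin \<theta> * sin \<phi>"
proof -
  define \<rho> where "\<rho> = sqrt (x^2 + y^2 + z^2)"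
  have rp: "\<rho> > 0" using hp \<rho>_def by simp
  have r2: "\<rho>^2 = x^2 + y^2 + z^2" unfolding \<rho>_def by simp
  have "x^2 \<le> \<rho>^2" using r2 by simp
  hence "(x/\<rho>)^2 \<le> 1" using rp by (simp add: power_divide)
  hence ab: "\<bar>x/\<rho>\<bar> \<le> 1" using abs_le_square_iff[of "x/\<rho>" 1] by simp
  define \<theta> where "\<theta> = arccos (x/\<rho>)"
  have b: "-1 \<le> x/\<rho>" "x/\<rho> \<le> 1" using ab abs_le_iff[of "x/\<rho>" 1] by linarith+
  have th: "\<theta> \<in> {0..pi}" using arccos_bounded[OF b] \<theta>_def by simp
  have ct: "cos \<theta> = x/\<rho>" using ab \<theta>_def by (simp add: cos_arccos_abs)
  have "sin \<theta> = sqrt (1 - (x/\<rho>)^2)" using ab \<theta>_def by (simp add: sin_arccos_abs)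
  also have "1 - (x/\<rho>)^2 = (y^2 + z^2) / \<rho>^2"
  proof -
    have "(y^2 + z^2) / \<rho>^2 = (\<rho>^2 - x^2) / \<rho>^2" using r2 by simp
    also have "\<dots> = 1 - (x/\<rho>)^2" using rp by (simp add: diff_divide_distrib power_divide)
    finally show ?thesis by simp
  qed
  also have "sqrt \<dots> = sqrt (y^2 + z^2) / \<rho>" using rp by (simp add: real_sqrt_divide)
  finally have st: "sin \<theta> = sqrt (y^2 + z^2) / \<rho>" .
  obtain \<phi> where ph: "y = sqrt (y^2 + z^2) * cos \<phi>" "z = sqrt (y^2 + z^2) * sin \<phi>"
    using polar2 by blast
  have e1: "x = \<rho> * cos \<theta>" using ct rp by simp
  have e2: "y = \<rho> * sin \<theta> * cos \<phi>" using st rp by (simp, subst ph(1), simp)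
  have e3: "z = \<rho> * sin \<theta> * sin \<phi>" using st rp by (simp, subst ph(2), simp)
  show ?thesis using e1 e2 e3 th unfolding \<rho>_def by blast
qed

lemma ell_calc:
  fixes R a \<beta> \<theta> \<phi> :: real
  assumes "a > 0" "\<beta>^2 < 1"
  shows "(R * cos \<theta>)^2 / (a * sqrt (1 - \<beta>^2))^2 + ((R * sin \<theta> * cos \<phi>)^2 + (R * sin \<theta> * sin \<phi>)^2) / a^2
     = R^2 * (1 - \<beta>^2 * (sin \<theta>)^2) / (a^2 * (1 - \<beta>^2))"
proof -
  have q: "(a * sqrt (1 - \<beta>^2))^2 = a^2 * (1 - \<beta>^2)" using assms by (simp add: power_mult_distrib)
  have yz: "(R * sin \<theta> * cos \<phi>)^2 + (R * sin \<theta> * sin \<phi>)^2 = (R * sin \<theta>)^2"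
  proof -
    have "(R * sin \<theta> * cos \<phi>)^2 + (R * sin \<theta> * sin \<phi>)^2 = (R * sin \<theta>)^2 * ((cos \<phi>)^2 + (sin \<phi>)^2)"
      by algebra
    thus ?thesis by simp
  qed
  have nz: "1 - \<beta>^2 \<noteq> 0" "a \<noteq> 0" using assms by auto
  have e: "(cos \<theta>)^2 = 1 - (sin \<theta>)^2" using sin_cos_squared_add[of \<theta>] by linarith
  show ?thesis unfolding q yz using nz
    by (simp add: field_simps power_mult_distrib e)
qed

theorem theorem1:
  fixes c k \<beta> :: real and r :: "real \<Rightarrow> real"
  assumes hc: "c > 0" and hk: "k > 0" and h\<beta>: "0 < \<beta>" "\<beta> < 1"
    and hr: "\<And>\<theta>. \<theta> \<in> {0..pi} \<Longrightarrow> r \<theta> > 0"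
    and hconst: "\<And>\<theta> \<theta>'. \<theta> \<in> {0..pi} \<Longrightarrow> \<theta>' \<in> {0..pi} \<Longrightarrow>
        round_trip_phase c k (\<beta> * c) r \<theta> = round_trip_phase c k (\<beta> * c) r \<theta>'"
  shows "(\<forall>\<theta>\<in>{0..pi}. r \<theta> = r (pi/2) * sqrt (1 - \<beta>^2) / sqrt (1 - \<beta>^2 * (sin \<theta>)^2))
    \<and> cavity_boundary r = {(x, y, z). x^2 / (r (pi/2) * sqrt (1 - \<beta>^2))^2 + (y^2 + z^2) / (r (pi/2))^2 = 1}
    \<and> r 0 = r (pi/2) / (1 / sqrt (1 - \<beta>^2))
    \<and> r 0 / r (pi/2) = sqrt (1 - \<beta>^2)"
proof -
  define a where "a = r (pi/2)"
  define q where "q = sqrt (1 - \<beta>^2)"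
  have bb: "\<beta>^2 < 1" using h\<beta> by (simp add: power_less_one_iff)
  have qp: "q > 0" using bb q_def by simp
  have q2: "q^2 = 1 - \<beta>^2" using bb q_def by simp
  have pi2: "pi/2 \<in> {0..pi}" by simp
  have ap: "a > 0" using hr[OF pi2] a_def by simp
  have Sp: "1 - \<beta>^2 * (sin \<theta>)^2 > 0" for \<theta>
  proof -
    have "(sin \<theta>)^2 \<le> 1" by (simp add: abs_square_le_1)
    hence "\<beta>^2 * (sin \<theta>)^2 \<le> \<beta>^2" by (simp add: mult_left_le)
    thus ?thesis using bb by linarith
  qed
  have key: "r \<theta> * sqrt (1 - \<beta>^2 * (sin \<theta>)^2) = a * q" if th: "\<theta> \<in> {0..pi}" for \<theta>
  proof -
    have "2 * k * r \<theta> * sqrt (1 - \<beta>^2 * (sin \<theta>)^2) / (1 - \<beta>^2)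
        = 2 * k * a * sqrt (1 - \<beta>^2 * (sin (pi/2))^2) / (1 - \<beta>^2)"
      using hconst[OF th pi2] phase_eq[where r=r and \<theta>=\<theta> and k=k, OF hc h\<beta> hr[OF th]] phase_eq[where r=r and \<theta>="pi/2" and k=k, OF hc h\<beta> hr[OF pi2]]
      a_def by simp
    hence "r \<theta> * sqrt (1 - \<beta>^2 * (sin \<theta>)^2) = a * sqrt (1 - \<beta>^2 * (sin (pi/2))^2)"
      using hk bb by (simp add: divide_cancel_right)
    thus ?thesis using q_def by simp
  qed
  have P1: "r \<theta> = a * q / sqrt (1 - \<beta>^2 * (sin \<theta>)^2)" if th: "\<theta> \<in> {0..pi}" for \<theta>
    using key[OF th] Sp[of \<theta>] by (simp add: eq_divide_eq)
  have r0: "r 0 = a * q" using P1[of 0] by simp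
  have P2: "cavity_boundary r = {(x, y, z). x^2 / (a * q)^2 + (y^2 + z^2) / a^2 = 1}"
  proof (rule set_eqI, rule iffI)
    fix p assume "p \<in> cavity_boundary r"
    then obtain \<theta> \<phi> where th: "\<theta> \<in> {0..pi}" and p: "p = (r \<theta> * cos \<theta>, r \<theta> * sin \<theta> * cos \<phi>, r \<theta> * sin \<theta> * sin \<phi>)"
      unfolding cavity_boundary_def by blast
    have k2: "(r \<theta>)^2 * (1 - \<beta>^2 * (sin \<theta>)^2) = a^2 * (1 - \<beta>^2)"
    proof -
      have "(r \<theta> * sqrt (1 - \<beta>^2 * (sin \<theta>)^2))^2 = (a*q)^2" using key[OF th] by simp
      thus ?thesis using Sp[of \<theta>] q2 by (simp add: power_mult_distrib)
    qed
    have "(r \<theta> * cos \<theta>)^2 / (a * q)^2 + ((r \<theta> * sin \<theta> * cos \<phi>)^2 + (r \<theta> * sin \<theta> * sin \<phi>)^2) / a^2 = 1"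
      unfolding q_def ell_calc[OF ap bb] k2 using ap bb by simp
    thus "p \<in> {(x, y, z). x^2 / (a * q)^2 + (y^2 + z^2) / a^2 = 1}" using p by simp
  next
    fix p assume "p \<in> {(x, y, z). x^2 / (a * q)^2 + (y^2 + z^2) / a^2 = 1}"
    then obtain x y z where p: "p = (x, y, z)" and E: "x^2 / (a * q)^2 + (y^2 + z^2) / a^2 = 1"
      by auto
    define \<rho> where "\<rho> = sqrt (x^2 + y^2 + z^2)"
    have "\<rho> > 0"
    proof (rule ccontr)
      assume "\<not> \<rho> > 0"
      moreover have "x^2 + y^2 + z^2 \<ge> 0" by simp
      ultimately have "x^2 + y^2 + z^2 = 0" unfolding \<rho>_def by simp
      hence "x = 0" "y = 0" "z = 0" by (auto simp: add_nonneg_eq_0_iff)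
      thus False using E by simp
    qed
    then obtain \<theta> \<phi> where th: "\<theta> \<in> {0..pi}" and xyz: "x = \<rho> * cos \<theta>"
       "y = \<rho> * sin \<theta> * cos \<phi>" "z = \<rho> * sin \<theta> * sin \<phi>"
      using sph[of x y z] unfolding \<rho>_def by blast
    have "\<rho>^2 * (1 - \<beta>^2 * (sin \<theta>)^2) / (a^2 * (1 - \<beta>^2)) = 1"
      using E unfolding xyz q_def ell_calc[OF ap bb] .
    hence "\<rho>^2 * (1 - \<beta>^2 * (sin \<theta>)^2) = a^2 * (1 - \<beta>^2)" using ap bb by simp
    moreover have "(r \<theta>)^2 * (1 - \<beta>^2 * (sin \<theta>)^2) = a^2 * (1 - \<beta>^2)"
    proof -
      have "(r \<theta> * sqrt (1 - \<beta>^2 * (sin \<theta>)^2))^2 = (a*q)^2" using key[OF th] by simp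
      thus ?thesis using Sp[of \<theta>] q2 by (simp add: power_mult_distrib)
    qed
    ultimately have "\<rho>^2 * (1 - \<beta>^2 * (sin \<theta>)^2) = (r \<theta>)^2 * (1 - \<beta>^2 * (sin \<theta>)^2)" by simp
    moreover have "1 - \<beta>^2 * (sin \<theta>)^2 \<noteq> 0" using Sp[of \<theta>] by linarith
    ultimately have "\<rho>^2 = (r \<theta>)^2" by simp
    hence "\<rho> = r \<theta>" using \<open>\<rho> > 0\<close> hr[OF th] by (simp add: power2_eq_iff_nonneg)
    hence pp: "p = (r \<theta> * cos \<theta>, r \<theta> * sin \<theta> * cos \<phi>, r \<theta> * sin \<theta> * sin \<phi>)"
      using p xyz by simp
    show "p \<in> cavity_boundary r" unfolding cavity_boundary_def pp using th by blast
  qed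
  show ?thesis
  proof (intro conjI)
    show "\<forall>\<theta>\<in>{0..pi}. r \<theta> = r (pi/2) * sqrt (1 - \<beta>^2) / sqrt (1 - \<beta>^2 * (sin \<theta>)^2)"
      unfolding a_def[symmetric] q_def[symmetric] using P1 by blast
    show "cavity_boundary r = {(x, y, z). x^2 / (r (pi/2) * sqrt (1 - \<beta>^2))^2 + (y^2 + z^2) / (r (pi/2))^2 = 1}"
      unfolding a_def[symmetric] q_def[symmetric] by (rule P2)
    show "r 0 = r (pi/2) / (1 / sqrt (1 - \<beta>^2))" unfolding a_def[symmetric] q_def[symmetric] using r0 qp by simp
    show "r 0 / r (pi/2) = sqrt (1 - \<beta>^2)" unfolding a_def[symmetric] q_def[symmetric] using r0 ap by simp
  qed
qed

end
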